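(* Let $n\ge 2$, $d\ge n+2$, and let $f$ be a Perazzo form of degree $d$ in $S$, with $A_f$ having $h$-vector $(h_0,\dots,h_d)$. Then: (1) $h_1=h_{d-1}=n+3$; (2) $h_2=h_{d-2}\ge n+4$; (3) $h_i\le d+2$ for all $i$, i.e. the Sperner number (maximum entry of the $h$-vector) is at most $d+2$.
   Context: $K$ is an algebraically closed field of characteristic zero. $S=K[x_0,\dots,x_n,u,v]$ and $R=K[y_0,\dots,y_n,U,V]$ acts on $S$ by differentiation ($y_i=\partial/\partial x_i$, $U=\partial/\partial u$, $V=\partial/\partial v$). A Perazzo form of degree $d$ is $f=x_0p_0+x_1p_1+\cdots+x_np_n+g$ where $p_0,\dots,p_n\in K[u,v]_{d-1}$ are linearly independent but algebraically dependent forms and $g\in K[u,v]_d$. $\operatorname{Ann}_R(f)=\{\theta\in R:\theta\circ f=0\}$ and $A_f=R/\operatorname{Ann}_R(f)$ is a graded artinian Gorenstein algebra of socle degree $d$; its $h$-vector is $h_i=\dim_K [A_f]_i$, which equals the dimension of the $K$-span of all order-$i$ partial derivatives of $f$, and satisfies $h_i=h_{d-i}$. *)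

theory Defs
  imports "HOL-Library.Poly_Mapping" "HOL-Computational_Algebra.Polynomial"
begin

text \<open>Multivariate polynomials over a field: finitely supported maps from
  monomials (finitely supported exponent vectors, variable i has index i) to coefficients.\<close>
type_synonym 'a mpoly = "(nat \<Rightarrow>\<^sub>0 nat) \<Rightarrow>\<^sub>0 'a"

definition mvar :: "nat \<Rightarrow> 'a::comm_ring_1 mpoly" where
  "mvar i = Poly_Mapping.single (Poly_Mapping.single i 1) 1"

definition msmult :: "'a::comm_ring_1 \<Rightarrow> 'a mpoly \<Rightarrow> 'a mpoly" where
  "msmult c p = Poly_Mapping.map (\<lambda>x. c * x) p"

definition mon_deg :: "(nat \<Rightarrow>\<^sub>0 nat) \<Rightarrow> nat" where
  "mon_deg m = (\<Sum>i\<in>Poly_Mapping.keys m. Poly_Mapping.lookup m i)"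

definition homogeneous :: "nat \<Rightarrow> 'a::comm_ring_1 mpoly \<Rightarrow> bool" where
  "homogeneous k p \<longleftrightarrow> (\<forall>m\<in>Poly_Mapping.keys p. mon_deg m = k)"

definition vars_in :: "nat set \<Rightarrow> 'a::comm_ring_1 mpoly \<Rightarrow> bool" where
  "vars_in V p \<longleftrightarrow> (\<forall>m\<in>Poly_Mapping.keys p. Poly_Mapping.keys m \<subseteq> V)"

definition pdiff :: "nat \<Rightarrow> 'a::comm_ring_1 mpoly \<Rightarrow> 'a mpoly" where
  "pdiff j p = (\<Sum>m\<in>Poly_Mapping.keys p. Poly_Mapping.single (m - Poly_Mapping.single j 1)
                                  (of_nat (Poly_Mapping.lookup m j) * Poly_Mapping.lookup p m))"

definition msubst :: "'a::comm_ring_1 mpoly \<Rightarrow> (nat \<Rightarrow> 'a mpoly) \<Rightarrow> 'a mpoly" where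
  "msubst F p = (\<Sum>m\<in>Poly_Mapping.keys F. msmult (Poly_Mapping.lookup F m) (\<Prod>j\<in>Poly_Mapping.keys m. p j ^ Poly_Mapping.lookup m j))"

definition lin_indep_fam :: "nat \<Rightarrow> (nat \<Rightarrow> 'a::comm_ring_1 mpoly) \<Rightarrow> bool" where
  "lin_indep_fam n p \<longleftrightarrow>
     (\<forall>c. (\<Sum>i\<le>n. msmult (c i) (p i)) = 0 \<longrightarrow> (\<forall>i\<le>n. c i = 0))"

definition alg_dep_fam :: "nat \<Rightarrow> (nat \<Rightarrow> 'a::comm_ring_1 mpoly) \<Rightarrow> bool" where
  "alg_dep_fam n p \<longleftrightarrow> (\<exists>F. F \<noteq> 0 \<and> vars_in {..n} F \<and> msubst F p = 0)"

text \<open>Perazzo form of degree d in S = K[x_0..x_n,u,v], with x_i = variable i,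
  u = variable n+1, v = variable n+2.\<close>
definition perazzo_form :: "nat \<Rightarrow> nat \<Rightarrow> 'a::comm_ring_1 mpoly \<Rightarrow> bool" where
  "perazzo_form n d f \<longleftrightarrow>
     (\<exists>p g. (\<forall>i\<le>n. homogeneous (d - 1) (p i) \<and> vars_in {n+1, n+2} (p i))
          \<and> lin_indep_fam n p \<and> alg_dep_fam n p
          \<and> homogeneous d g \<and> vars_in {n+1, n+2} g
          \<and> f = (\<Sum>i\<le>n. mvar i * p i) + g)"

primrec derivs :: "nat \<Rightarrow> nat \<Rightarrow> 'a::comm_ring_1 mpoly \<Rightarrow> 'a mpoly set" where
  "derivs N 0 f = {f}"
| "derivs N (Suc i) f = {pdiff j g | j g. j < N \<and> g \<in> derivs N i f}"

text \<open>h-vector of A_f: h_i = dim of the K-span of the order-i partials of f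
  (here f lives in N = n+3 variables).\<close>
definition hvec :: "nat \<Rightarrow> 'a::field mpoly \<Rightarrow> nat \<Rightarrow> nat" where
  "hvec N f i = vector_space.dim msmult (derivs N i f)"

end

theory Submission
  imports Defs "HOL-Library.Function_Algebras"
begin

abbreviation lk :: "('b \<Rightarrow>\<^sub>0 'c::zero) \<Rightarrow> 'b \<Rightarrow> 'c" where "lk \<equiv> Poly_Mapping.lookup"
abbreviation sg :: "'b \<Rightarrow> 'c \<Rightarrow> ('b \<Rightarrow>\<^sub>0 'c::zero)" where "sg \<equiv> Poly_Mapping.single"

lemma lookup_msmult[simp]: "lk (msmult c p) m = c * lk p m"
  unfolding msmult_def by (simp add: Poly_Mapping.map.rep_eq when_def)

lemma msmult_vs: "vector_space (msmult :: 'a::field \<Rightarrow> 'a mpoly \<Rightarrow> 'a mpoly)"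
  by unfold_locales (auto intro!: poly_mapping_eqI simp: lookup_add algebra_simps)

interpretation MV: vector_space "msmult :: 'a::field \<Rightarrow> 'a mpoly \<Rightarrow> 'a mpoly"
  by (rule msmult_vs)

lemma lookup_pdiff:
  "lk (pdiff j p) m = of_nat (lk m j + 1) * lk p (m + sg j 1)"
proof -
  let ?d = "sg j (1::nat)"
  have "lk (pdiff j p) m = (\<Sum>k\<in>Poly_Mapping.keys p. (if m = k - ?d then of_nat (lk k j) * lk p k else 0))"
    unfolding pdiff_def lookup_sum by (auto simp: lookup_single when_def intro!: sum.cong)
  also have "\<dots> = (\<Sum>k\<in>Poly_Mapping.keys p. (if k = m + ?d then of_nat (lk k j) * lk p k else 0))"
  proof (rule sum.cong[OF refl])
    fix k assume "k \<in> Poly_Mapping.keys p"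
    show "(if m = k - ?d then of_nat (lk k j) * lk p k else 0) =
          (if k = m + ?d then of_nat (lk k j) * lk p k else 0)"
    proof (cases "lk k j = 0")
      case True
      then have "k \<noteq> m + ?d" by (auto simp: lookup_add)
      then show ?thesis using True by simp
    next
      case False
      have "m = k - ?d \<longleftrightarrow> k = m + ?d"
      proof
        assume "m = k - ?d"
        then show "k = m + ?d" using False
          by (auto intro!: poly_mapping_eqI simp: lookup_add lookup_minus lookup_single when_def)
      next
        assume "k = m + ?d" then show "m = k - ?d"
          by (auto intro!: poly_mapping_eqI simp: lookup_add lookup_minus)
      qed
      then show ?thesis by simp
    qed
  qed
  also have "\<dots> = (if m + ?d \<in> Poly_Mapping.keys p then of_nat (lk (m + ?d) j) * lk p (m + ?d) else 0)"
    by (simp add: sum.delta)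
  also have "\<dots> = of_nat (lk m j + 1) * lk p (m + ?d)"
    by (auto simp: lookup_add in_keys_iff)
  finally show ?thesis .
qed

lemma pdiff_add: "pdiff j (p + q) = pdiff j p + pdiff j q"
  by (rule poly_mapping_eqI) (simp add: lookup_pdiff lookup_add algebra_simps)
lemma pdiff_diff: "pdiff j (p - q) = pdiff j p - pdiff j q"
  by (rule poly_mapping_eqI) (simp add: lookup_pdiff lookup_minus algebra_simps)
lemma pdiff_uminus: "pdiff j (- p) = - pdiff j p"
  by (rule poly_mapping_eqI) (simp add: lookup_pdiff)
lemma pdiff_zero[simp]: "pdiff j 0 = 0"
  by (rule poly_mapping_eqI) (simp add: lookup_pdiff)
lemma pdiff_msmult: "pdiff j (msmult c p) = msmult c (pdiff j p)"
  by (rule poly_mapping_eqI) (simp add: lookup_pdiff algebra_simps)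
lemma pdiff_sum: "pdiff j (sum g A) = (\<Sum>a\<in>A. pdiff j (g a))"
  by (induction A rule: infinite_finite_induct) (simp_all add: pdiff_add)

lemma pdiff_commute: "pdiff j (pdiff k p) = pdiff k (pdiff j p)"
proof (rule poly_mapping_eqI)
  fix m
  show "lk (pdiff j (pdiff k p)) m = lk (pdiff k (pdiff j p)) m"
    by (cases "j = k") (simp_all add: lookup_pdiff lookup_add lookup_single ac_simps)
qed

lemma msmult_eq_0_iff[simp]: "msmult c (p::'a::field mpoly) = 0 \<longleftrightarrow> c = 0 \<or> p = 0"
proof
  assume a: "msmult c p = 0"
  show "c = 0 \<or> p = 0"
  proof (rule ccontr)
    assume "\<not> (c = 0 \<or> p = 0)"
    then obtain m where "lk p m \<noteq> 0" "c \<noteq> 0"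
      by (metis poly_mapping_eqI lookup_zero)
    then have "lk (msmult c p) m \<noteq> 0" by simp
    then show False using a by simp
  qed
qed (auto intro!: poly_mapping_eqI)

lemma msmult_add_right: "msmult c (p + q) = msmult c p + msmult c q"
  by (rule poly_mapping_eqI) (simp add: lookup_add algebra_simps)
lemma msmult_diff_right: "msmult c (p - q) = msmult c p - msmult c q"
  by (rule poly_mapping_eqI) (simp add: lookup_minus algebra_simps)
lemma msmult_add_left: "msmult (a + b) p = msmult a p + msmult b p"
  by (rule poly_mapping_eqI) (simp add: lookup_add algebra_simps)
lemma msmult_diff_left: "msmult (a - b) p = msmult a p - msmult b p"
  by (rule poly_mapping_eqI) (simp add: lookup_minus algebra_simps)
lemma msmult_msmult[simp]: "msmult a (msmult b p) = msmult (a * b) p"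
  by (rule poly_mapping_eqI) (simp add: algebra_simps)
lemma msmult_one[simp]: "msmult 1 p = p"
  by (rule poly_mapping_eqI) simp
lemma msmult_zero_left[simp]: "msmult 0 p = 0"
  by (rule poly_mapping_eqI) simp
lemma msmult_zero_right[simp]: "msmult c 0 = 0"
  by (rule poly_mapping_eqI) simp
lemma msmult_sum: "msmult c (sum g A) = (\<Sum>a\<in>A. msmult c (g a))"
  by (induction A rule: infinite_finite_induct) (simp_all add: msmult_add_right)
lemma msmult_minus_one: "msmult (-1) p = - p"
  by (rule poly_mapping_eqI) simp

lemma mon_deg_sum: "finite S \<Longrightarrow> Poly_Mapping.keys m \<subseteq> S \<Longrightarrow> mon_deg m = (\<Sum>i\<in>S. lk m i)"
  unfolding mon_deg_def by (rule sum.mono_neutral_left) (auto simp: in_keys_iff)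

lemma mon_deg_add[simp]: "mon_deg (a + b) = mon_deg a + mon_deg b"
proof -
  let ?S = "Poly_Mapping.keys a \<union> Poly_Mapping.keys b"
  have "mon_deg (a + b) = (\<Sum>i\<in>?S. lk (a + b) i)"
    by (rule mon_deg_sum) (auto simp: in_keys_iff lookup_add)
  also have "\<dots> = (\<Sum>i\<in>?S. lk a i) + (\<Sum>i\<in>?S. lk b i)"
    by (simp add: lookup_add sum.distrib)
  also have "\<dots> = mon_deg a + mon_deg b"
    using mon_deg_sum[of ?S a] mon_deg_sum[of ?S b] by simp
  finally show ?thesis .
qed

lemma mon_deg_single[simp]: "mon_deg (sg j k) = k"
  by (simp add: mon_deg_def)

lemma mon_deg_zero[simp]: "mon_deg 0 = 0"
  by (simp add: mon_deg_def)

lemma mon_deg_0_iff: "mon_deg m = 0 \<longleftrightarrow> m = 0"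
  unfolding mon_deg_def by (auto simp: in_keys_iff intro!: poly_mapping_eqI)

lemma homogeneous_iff: "homogeneous k p \<longleftrightarrow> (\<forall>m. lk p m \<noteq> 0 \<longrightarrow> mon_deg m = k)"
  unfolding homogeneous_def by (auto simp: in_keys_iff)
lemma vars_in_iff: "vars_in V p \<longleftrightarrow> (\<forall>m. lk p m \<noteq> 0 \<longrightarrow> Poly_Mapping.keys m \<subseteq> V)"
  unfolding vars_in_def by (auto simp: in_keys_iff)

lemma keys_add_single: "Poly_Mapping.keys (m + sg j (Suc 0)) = insert j (Poly_Mapping.keys m)"
  by (auto simp: in_keys_iff lookup_add lookup_single when_def split: if_splits)

lemma one_plus_of_nat_nz[simp]: "(1::'a::field_char_0) + of_nat k \<noteq> 0"
  by (metis of_nat_Suc of_nat_eq_0_iff nat.distinct(1) add.commute)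

lemma add_nz: "x + y \<noteq> (0::'b::comm_monoid_add) \<Longrightarrow> x \<noteq> 0 \<or> y \<noteq> 0"
  by auto
lemma diff_nz: "x - y \<noteq> (0::'b::ab_group_add) \<Longrightarrow> x \<noteq> 0 \<or> y \<noteq> 0"
  by auto

lemma hom_pdiff: "homogeneous k p \<Longrightarrow> homogeneous (k - 1) (pdiff j (p::'a::field_char_0 mpoly))"
  unfolding homogeneous_iff by (auto simp: lookup_pdiff)
lemma hom0_pdiff: "homogeneous 0 p \<Longrightarrow> pdiff j (p::'a::field_char_0 mpoly) = 0"
  unfolding homogeneous_iff by (auto simp: lookup_pdiff intro!: poly_mapping_eqI)
lemma vars_pdiff: "vars_in V p \<Longrightarrow> vars_in V (pdiff j (p::'a::field_char_0 mpoly))"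
  unfolding vars_in_iff lookup_pdiff
proof (intro allI impI)
  fix m assume a: "\<forall>m. lk p m \<noteq> 0 \<longrightarrow> Poly_Mapping.keys m \<subseteq> V"
    "of_nat (lk m j + 1) * lk p (m + sg j 1) \<noteq> 0"
  then have "Poly_Mapping.keys (m + sg j (Suc 0)) \<subseteq> V" by auto
  then show "Poly_Mapping.keys m \<subseteq> V" by (simp add: keys_add_single)
qed
lemma vars_pdiff_out: "vars_in V p \<Longrightarrow> j \<notin> V \<Longrightarrow> pdiff j (p::'a::field_char_0 mpoly) = 0"
  unfolding vars_in_iff by (auto simp: lookup_pdiff keys_add_single intro!: poly_mapping_eqI)

lemma hom_zero[simp]: "homogeneous k 0"
  by (simp add: homogeneous_def)
lemma hom_add: "homogeneous k p \<Longrightarrow> homogeneous k q \<Longrightarrow> homogeneous k (p + q)"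
  unfolding homogeneous_iff by (auto simp: lookup_add dest!: add_nz)
lemma hom_diff: "homogeneous k p \<Longrightarrow> homogeneous k q \<Longrightarrow> homogeneous k (p - (q::'a::field mpoly))"
  unfolding homogeneous_iff lookup_minus by (metis diff_zero diff_self)
lemma hom_uminus: "homogeneous k p \<Longrightarrow> homogeneous k (- (p::'a::field mpoly))"
  unfolding homogeneous_iff by (auto)
lemma hom_msmult: "homogeneous k p \<Longrightarrow> homogeneous k (msmult c (p::'a::field mpoly))"
  unfolding homogeneous_iff by (auto)
lemma hom_sum: "(\<And>a. a \<in> A \<Longrightarrow> homogeneous k (g a)) \<Longrightarrow> homogeneous k (sum g A)"
  by (induction A rule: infinite_finite_induct) (auto intro: hom_add)

lemma vars_zero[simp]: "vars_in V 0"
  by (simp add: vars_in_def)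
lemma vars_add: "vars_in V p \<Longrightarrow> vars_in V q \<Longrightarrow> vars_in V (p + q)"
  unfolding vars_in_iff by (auto simp: lookup_add dest!: add_nz)
lemma vars_diff: "vars_in V p \<Longrightarrow> vars_in V q \<Longrightarrow> vars_in V (p - (q::'a::field mpoly))"
  unfolding vars_in_iff lookup_minus by (metis diff_zero diff_self)
lemma vars_msmult: "vars_in V p \<Longrightarrow> vars_in V (msmult c (p::'a::field mpoly))"
  unfolding vars_in_iff by (auto)
lemma vars_sum: "(\<And>a. a \<in> A \<Longrightarrow> vars_in V (g a)) \<Longrightarrow> vars_in V (sum g A)"
  by (induction A rule: infinite_finite_induct) (auto intro: vars_add)
lemma vars_mono: "vars_in V p \<Longrightarrow> V \<subseteq> W \<Longrightarrow> vars_in W p"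
  unfolding vars_in_def by blast

lemma hom_span: "S \<subseteq> {p. homogeneous k p} \<Longrightarrow> x \<in> MV.span S \<Longrightarrow> homogeneous k (x::'a::field mpoly)"
proof -
  assume S: "S \<subseteq> {p. homogeneous k p}" and x: "x \<in> MV.span S"
  from x show ?thesis
  proof (induction rule: MV.span_induct_alt)
    case base then show ?case by simp
  next
    case (step c x y) then show ?case using S by (auto intro!: hom_add hom_msmult)
  qed
qed

lemma vars_span: "S \<subseteq> {p. vars_in V p} \<Longrightarrow> x \<in> MV.span S \<Longrightarrow> vars_in V (x::'a::field mpoly)"
proof -
  assume S: "S \<subseteq> {p. vars_in V p}" and x: "x \<in> MV.span S"
  from x show ?thesis
  proof (induction rule: MV.span_induct_alt)
    case base then show ?case by simp
  next
    case (step c x y) then show ?case using S by (auto intro!: vars_add vars_msmult)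
  qed
qed

lemma lookup_mvar_mult:
  "lk (mvar i * p) m = (if lk m i \<ge> 1 then lk p (m - sg i 1) else 0)"
proof -
  have "lk (mvar i * p) m = (\<Sum>q. lk p q when m = sg i 1 + q)"
    unfolding lookup_mult mvar_def by (simp add: lookup_single when_mult)
  also have "\<dots> = (if lk m i \<ge> 1 then lk p (m - sg i 1) else 0)"
  proof (cases "lk m i \<ge> 1")
    case True
    have "(\<Sum>q. lk p q when m = sg i 1 + q) = (\<Sum>q. lk p q when q = m - sg i 1)"
    proof (rule Sum_any.cong)
      fix q
      have "m = sg i 1 + q \<longleftrightarrow> q = m - sg i 1"
      proof
        assume "q = m - sg i 1" then show "m = sg i 1 + q" using True
          by (auto intro!: poly_mapping_eqI simp: lookup_add lookup_minus lookup_single when_def)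
      qed (auto intro!: poly_mapping_eqI simp: lookup_add lookup_minus)
      then show "(lk p q when m = sg i 1 + q) = (lk p q when q = m - sg i 1)" by simp
    qed
    then show ?thesis using True by simp
  next
    case False
    have "m \<noteq> sg i 1 + q" for q using False by (auto simp: lookup_add)
    then show ?thesis using False by simp
  qed
  finally show ?thesis .
qed

lemma pdiff_mvar_mult:
  "pdiff j (mvar i * p) = (if i = j then p else 0) + mvar i * pdiff j (p::'a::field_char_0 mpoly)"
proof (rule poly_mapping_eqI)
  fix m
  show "lk (pdiff j (mvar i * p)) m = lk ((if i = j then p else 0) + mvar i * pdiff j p) m"
  proof (cases "i = j")
    case True
    have e1: "m + sg j 1 - sg j 1 = m"
      by (auto intro!: poly_mapping_eqI simp: lookup_add lookup_minus)
    have e2: "1 \<le> lk m j \<Longrightarrow> m - sg j 1 + sg j 1 = m"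
      by (auto intro!: poly_mapping_eqI simp: lookup_add lookup_minus lookup_single when_def)
    have e3: "1 \<le> lk m j \<Longrightarrow> lk (m - sg j 1) j + 1 = lk m j"
      by (auto simp: lookup_minus)
    have "lk (pdiff j (mvar i * p)) m = of_nat (lk m j + 1) * lk p m"
      using True e1 by (simp add: lookup_pdiff lookup_mvar_mult lookup_add)
    also have "\<dots> = lk ((if i = j then p else 0) + mvar i * pdiff j p) m"
    proof (cases "1 \<le> lk m j")
      case True
      then show ?thesis using \<open>i = j\<close> e2 e3
        by (simp add: lookup_pdiff lookup_mvar_mult lookup_add distrib_right)
    next
      case False
      then show ?thesis using \<open>i = j\<close>
        by (simp add: lookup_pdiff lookup_mvar_mult lookup_add)
    qed
    finally show ?thesis .
  next
    case False
    have e: "1 \<le> lk m i \<Longrightarrow> m + sg j 1 - sg i 1 = m - sg i 1 + sg j 1"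
      using False by (auto intro!: poly_mapping_eqI simp: lookup_add lookup_minus lookup_single when_def)
    show ?thesis using False e
      by (auto simp: lookup_pdiff lookup_mvar_mult lookup_add lookup_minus lookup_single)
  qed
qed

lemma mon_deg_minus_single: "1 \<le> lk m i \<Longrightarrow> mon_deg m = mon_deg (m - sg i 1) + 1"
proof -
  assume a: "1 \<le> lk m i"
  have "m = (m - sg i 1) + sg i 1" using a
    by (auto intro!: poly_mapping_eqI simp: lookup_add lookup_minus lookup_single when_def)
  then have "mon_deg m = mon_deg ((m - sg i 1) + sg i 1)" by simp
  then show ?thesis by simp
qed

lemma hom_mvar_mult: "homogeneous k p \<Longrightarrow> homogeneous (Suc k) (mvar i * p)"
  unfolding homogeneous_iff by (auto simp: lookup_mvar_mult mon_deg_minus_single split: if_splits)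

lemma vars_mvar_mult: "vars_in V p \<Longrightarrow> i \<in> V \<Longrightarrow> vars_in V (mvar i * p)"
  unfolding vars_in_iff
proof (intro allI impI)
  fix m assume a: "\<forall>m. lk p m \<noteq> 0 \<longrightarrow> Poly_Mapping.keys m \<subseteq> V" "i \<in> V" "lk (mvar i * p) m \<noteq> 0"
  then have "1 \<le> lk m i" "lk p (m - sg i 1) \<noteq> 0" by (auto simp: lookup_mvar_mult split: if_splits)
  then have "Poly_Mapping.keys (m - sg i 1) \<subseteq> V" using a by auto
  show "Poly_Mapping.keys m \<subseteq> V"
  proof
    fix x assume x: "x \<in> Poly_Mapping.keys m"
    show "x \<in> V"
    proof (cases "x = i")
      case False
      then have "x \<in> Poly_Mapping.keys (m - sg i 1)" using x
        by (auto simp: in_keys_iff lookup_minus lookup_single)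
      then show ?thesis using \<open>Poly_Mapping.keys (m - sg i 1) \<subseteq> V\<close> by auto
    qed (use a in auto)
  qed
qed

lemma all_pdiff_zero:
  assumes "vars_in V p" "homogeneous (Suc k) p" "\<forall>j\<in>V. pdiff j p = (0::'a::field_char_0 mpoly)"
  shows "p = 0"
proof (rule poly_mapping_eqI, rule ccontr)
  fix m assume "lk p m \<noteq> lk 0 m"
  then have nz: "lk p m \<noteq> 0" by simp
  then have "mon_deg m = Suc k" using assms(2) by (auto simp: homogeneous_iff)
  then have "m \<noteq> 0" by auto
  then obtain j where j: "j \<in> Poly_Mapping.keys m"
    by (metis all_not_in_conv keys_eq_empty)
  then have "j \<in> V" using assms(1) nz by (auto simp: vars_in_iff)
  have e: "m - sg j 1 + sg j 1 = m" using j
    by (auto intro!: poly_mapping_eqI simp: lookup_add lookup_minus lookup_single when_def in_keys_iff)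
  have "lk (pdiff j p) (m - sg j 1) \<noteq> 0"
    using nz e by (simp add: lookup_pdiff)
  then show False using assms(3) \<open>j \<in> V\<close> by auto
qed

lemma hom0_zero:
  assumes "homogeneous 0 p" "lk p 0 = 0"
  shows "p = 0"
proof (rule poly_mapping_eqI)
  fix m show "lk p m = lk 0 m"
    using assms by (cases "m = 0") (auto simp: homogeneous_iff mon_deg_0_iff)
qed

primrec pdw :: "nat list \<Rightarrow> 'a::comm_ring_1 mpoly \<Rightarrow> 'a mpoly" where
  "pdw [] p = p"
| "pdw (j # w) p = pdw w (pdiff j p)"

lemma pdw_add: "pdw w (p + q) = pdw w p + pdw w q"
  by (induction w arbitrary: p q) (simp_all add: pdiff_add)
lemma pdw_diff: "pdw w (p - q) = pdw w p - pdw w (q::'a::field mpoly)"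
  by (induction w arbitrary: p q) (simp_all add: pdiff_diff)
lemma pdw_zero[simp]: "pdw w 0 = 0"
  by (induction w) simp_all
lemma pdw_msmult: "pdw w (msmult c p) = msmult c (pdw w (p::'a::field mpoly))"
  by (induction w arbitrary: p) (simp_all add: pdiff_msmult)
lemma pdw_sum: "pdw w (sum g A) = (\<Sum>a\<in>A. pdw w (g a))"
  by (induction A rule: infinite_finite_induct) (simp_all add: pdw_add)
lemma pdw_pdiff: "pdw w (pdiff j p) = pdiff j (pdw w p)"
  by (induction w arbitrary: p) (simp_all, metis pdiff_commute)
lemma pdw_append: "pdw (w @ w') p = pdw w' (pdw w p)"
  by (induction w arbitrary: p) simp_all
lemma pdw_swap: "pdw w (pdw w' p) = pdw w' (pdw w p)"
  by (induction w arbitrary: p) (simp_all add: pdw_pdiff)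
lemma pdw_snoc: "pdw (w @ [j]) p = pdiff j (pdw w p)"
  by (simp add: pdw_append)

lemma hom_pdw: "homogeneous k p \<Longrightarrow> homogeneous (k - length w) (pdw w (p::'a::field_char_0 mpoly))"
proof (induction w arbitrary: p k)
  case (Cons j w)
  have "homogeneous (k - 1) (pdiff j p)" by (rule hom_pdiff[OF Cons.prems])
  then show ?case using Cons.IH by fastforce
qed simp

lemma pdw_vanish: "homogeneous k p \<Longrightarrow> length w > k \<Longrightarrow> pdw w (p::'a::field_char_0 mpoly) = 0"
proof (induction w arbitrary: p k)
  case (Cons j w)
  show ?case
  proof (cases k)
    case 0
    then have "pdiff j p = 0" using Cons.prems hom0_pdiff by blast
    then show ?thesis by simp
  next
    case (Suc k')
    then have "homogeneous k' (pdiff j p)" using hom_pdiff[OF Cons.prems(1)] by simp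
    then show ?thesis using Cons Suc by simp
  qed
qed simp

lemma vars_pdw: "vars_in V p \<Longrightarrow> vars_in V (pdw w (p::'a::field_char_0 mpoly))"
  by (induction w arbitrary: p) (simp_all add: vars_pdiff)

lemma derivs_eq: "derivs N i f = {pdw w f | w. set w \<subseteq> {..<N} \<and> length w = i}"
proof (induction i)
  case 0 then show ?case by auto
next
  case (Suc i)
  show ?case
  proof
    show "derivs N (Suc i) f \<subseteq> {pdw w f |w. set w \<subseteq> {..<N} \<and> length w = Suc i}"
    proof
      fix x assume "x \<in> derivs N (Suc i) f"
      then obtain j w where "j < N" "set w \<subseteq> {..<N}" "length w = i" "x = pdiff j (pdw w f)"
        using Suc by auto
      then show "x \<in> {pdw w f |w. set w \<subseteq> {..<N} \<and> length w = Suc i}"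
        by (auto intro!: exI[of _ "w @ [j]"] simp: pdw_snoc)
    qed
  next
    show "{pdw w f |w. set w \<subseteq> {..<N} \<and> length w = Suc i} \<subseteq> derivs N (Suc i) f"
    proof
      fix x assume "x \<in> {pdw w f |w. set w \<subseteq> {..<N} \<and> length w = Suc i}"
      then obtain w where w: "set w \<subseteq> {..<N}" "length w = Suc i" "x = pdw w f" by auto
      then obtain w' j where "w = w' @ [j]" by (metis length_Suc_conv_rev)
      then have "x = pdiff j (pdw w' f)" "j < N" "set w' \<subseteq> {..<N}" "length w' = i" using w by (auto simp: pdw_snoc)
      then show "x \<in> derivs N (Suc i) f" using Suc by auto
    qed
  qed
qed

lemma finite_derivs: "finite (derivs N i f)"
proof -
  have "finite {w. set w \<subseteq> {..<N} \<and> length w = i}"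
    using finite_lists_length_eq[of "{..<N}" i] by simp
  then have "finite ((\<lambda>w. pdw w f) ` {w. set w \<subseteq> {..<N} \<and> length w = i})" by simp
  moreover have "derivs N i f = (\<lambda>w. pdw w f) ` {w. set w \<subseteq> {..<N} \<and> length w = i}"
    unfolding derivs_eq by auto
  ultimately show ?thesis by simp
qed

lemma apolar:
  assumes "homogeneous k r" "vars_in {..<N} r"
    "\<forall>w. set w \<subseteq> {..<N} \<and> length w = k \<longrightarrow> lk (pdw w r) 0 = 0"
  shows "r = (0::'a::field_char_0 mpoly)"
  using assms
proof (induction k arbitrary: r)
  case 0
  then show ?case using hom0_zero[of r] by (auto)
next
  case (Suc k)
  have "\<forall>j\<in>{..<N}. pdiff j r = 0"
  proof
    fix j assume j: "j \<in> {..<N}"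
    show "pdiff j r = 0"
    proof (rule Suc.IH)
      show "homogeneous k (pdiff j r)" using hom_pdiff[OF Suc.prems(1)] by simp
      show "vars_in {..<N} (pdiff j r)" using vars_pdiff[OF Suc.prems(2)] .
      show "\<forall>w. set w \<subseteq> {..<N} \<and> length w = k \<longrightarrow> lk (pdw w (pdiff j r)) 0 = 0"
      proof (intro allI impI)
        fix w assume "set w \<subseteq> {..<N} \<and> length w = k"
        then show "lk (pdw w (pdiff j r)) 0 = 0"
          using Suc.prems(3) j spec[OF Suc.prems(3), of "j # w"] by auto
      qed
    qed
  qed
  then show ?case using all_pdiff_zero Suc.prems by blast
qed

context vector_space
begin

lemma indep_family:
  assumes fin: "finite I" and rel: "\<And>c. (\<Sum>i\<in>I. c i *s g i) = 0 \<Longrightarrow> (\<forall>i\<in>I. c i = 0)"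
  shows "independent (g ` I)" "inj_on g I" "card (g ` I) = card I"
proof -
  show inj: "inj_on g I"
  proof (rule inj_onI, rule ccontr)
    fix i j assume ij: "i \<in> I" "j \<in> I" "g i = g j" "i \<noteq> j"
    define c where "c k = (if k = i then 1 else if k = j then -1 else (0::'a))" for k
    have "(\<Sum>k\<in>I. c k *s g k) = (\<Sum>k\<in>{i,j}. c k *s g k)"
      by (rule sum.mono_neutral_right) (use fin ij in \<open>auto simp: c_def\<close>)
    also have "\<dots> = 0" using ij by (simp add: c_def)
    finally have "c i = 0" using rel ij by blast
    then show False by (simp add: c_def)
  qed
  then show "card (g ` I) = card I" by (rule card_image)
  show "independent (g ` I)"
    unfolding dependent_finite[OF finite_imageI[OF fin]]
  proof (rule notI, elim exE conjE bexE)
    fix c v assume s: "(\<Sum>v\<in>g ` I. c v *s v) = 0" and v: "v \<in> g ` I" and cv: "c v \<noteq> 0"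
    have "(\<Sum>i\<in>I. (c \<circ> g) i *s g i) = 0" using s by (simp add: sum.reindex[OF inj])
    then have "\<forall>i\<in>I. (c \<circ> g) i = 0" by (rule rel)
    then show False using v cv by auto
  qed
qed

lemma card_le_dim_fin:
  assumes "finite V" "independent B" "B \<subseteq> span V"
  shows "card B \<le> dim V"
proof -
  obtain C where C: "C \<subseteq> V" "independent C" "V \<subseteq> span C" "card C = dim V"
    using basis_exists by blast
  have "B \<subseteq> span C" using assms(3) C(3) by (metis span_mono span_span subset_trans)
  then show ?thesis using independent_span_bound[of C B] C assms finite_subset by metis
qed

end

lemma sum_fun_app: "(\<Sum>x\<in>A. g x) b = (\<Sum>x\<in>A. g x b)"
  by (induction A rule: infinite_finite_induct) auto

lemma fs_vs: "vector_space (\<lambda>c (g::'b \<Rightarrow> 'a::field) x. c * g x)"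
  by unfold_locales (auto simp: algebra_simps fun_eq_iff)

lemma sym_le:
  fixes f :: "'a::field_char_0 mpoly"
  assumes hom: "homogeneous d f" and vars: "vars_in {..<N} f" and id: "i \<le> d"
  shows "MV.dim (derivs N (d - i) f) \<le> MV.dim (derivs N i f)"
proof -
  interpret FS: vector_space "(\<lambda>c (g::'a mpoly \<Rightarrow> 'a) x. c * g x)" by (rule fs_vs)
  let ?Di = "derivs N i f" and ?Dj = "derivs N (d - i) f"
  obtain B where B: "B \<subseteq> ?Di" "MV.independent B" "?Di \<subseteq> MV.span B" "card B = MV.dim ?Di"
    using MV.basis_exists by blast
  have finB: "finite B" using B(1) finite_derivs finite_subset by blast
  obtain C where C: "C \<subseteq> ?Dj" "MV.independent C" "?Dj \<subseteq> MV.span C" "card C = MV.dim ?Dj"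
    using MV.basis_exists by blast
  have finC: "finite C" using C(1) finite_derivs finite_subset by blast
  have "\<forall>b\<in>B. \<exists>w. set w \<subseteq> {..<N} \<and> length w = i \<and> b = pdw w f"
    using B(1) unfolding derivs_eq by blast
  then obtain wb where wb: "\<And>b. b \<in> B \<Longrightarrow> set (wb b) \<subseteq> {..<N} \<and> length (wb b) = i \<and> b = pdw (wb b) f"
    by metis
  define \<Psi> where "\<Psi> r = (\<lambda>b. if b \<in> B then lk (pdw (wb b) r) 0 else 0)" for r :: "'a mpoly"
  have hDj: "homogeneous i r" if "r \<in> MV.span ?Dj" for r
  proof (rule hom_span[OF _ that])
    show "?Dj \<subseteq> {p. homogeneous i p}"
    proof
      fix x assume "x \<in> ?Dj"
      then obtain w where "length w = d - i" "x = pdw w f" unfolding derivs_eq by blast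
      then show "x \<in> {p. homogeneous i p}" using hom_pdw[OF hom, of w] id by simp
    qed
  qed
  have vDj: "vars_in {..<N} r" if "r \<in> MV.span ?Dj" for r
  proof (rule vars_span[OF _ that])
    show "?Dj \<subseteq> {p. vars_in {..<N} p}"
      unfolding derivs_eq using vars_pdw[OF vars] by auto
  qed
  have key: "lk (pdw w r) 0 = (\<Sum>b\<in>B. a b * lk (pdw (wb b) r) 0)"
    if r: "r \<in> MV.span ?Dj" and a: "pdw w f = (\<Sum>b\<in>B. msmult (a b) b)" for w r a
    using r
  proof (induction rule: MV.span_induct_alt)
    case base then show ?case by simp
  next
    case (step c x y)
    from step.hyps(1) obtain v where v: "x = pdw v f" unfolding derivs_eq by blast
    have "pdw w x = pdw v (pdw w f)" using v pdw_swap by metis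
    also have "\<dots> = (\<Sum>b\<in>B. msmult (a b) (pdw v b))" by (simp add: a pdw_sum pdw_msmult)
    also have "\<dots> = (\<Sum>b\<in>B. msmult (a b) (pdw (wb b) x))"
      by (rule sum.cong[OF refl]) (metis wb v pdw_swap)
    finally have "lk (pdw w x) 0 = (\<Sum>b\<in>B. a b * lk (pdw (wb b) x) 0)"
      by (simp add: lookup_sum)
    then show ?case using step.IH
      by (simp add: pdw_add pdw_msmult lookup_add sum.distrib sum_distrib_left algebra_simps)
  qed
  have inj0: "r = 0" if r: "r \<in> MV.span ?Dj" and z: "\<Psi> r = 0" for r
  proof (rule apolar[OF hDj[OF r] vDj[OF r]], intro allI impI)
    fix w assume w: "set w \<subseteq> {..<N} \<and> length w = i"
    then have "pdw w f \<in> ?Di" unfolding derivs_eq by blast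
    then have "pdw w f \<in> MV.span B" using B(3) by blast
    then obtain a where a: "pdw w f = (\<Sum>b\<in>B. msmult (a b) b)"
      using MV.span_finite[OF finB] by auto
    have "\<forall>b\<in>B. lk (pdw (wb b) r) 0 = 0"
    proof
      fix b assume b: "b \<in> B"
      have "\<Psi> r b = 0" using z by simp
      then show "lk (pdw (wb b) r) 0 = 0" using b by (simp add: \<Psi>_def)
    qed
    then show "lk (pdw w r) 0 = 0" using key[OF r a] by simp
  qed
  have lin\<Psi>: "\<Psi> (\<Sum>x\<in>C. msmult (c x) x) = (\<Sum>x\<in>C. (\<lambda>b. c x * \<Psi> x b))" for c
    by (rule ext) (auto simp: \<Psi>_def pdw_sum pdw_msmult lookup_sum fun_eq_iff sum_fun_app)
  have rel: "\<forall>x\<in>C. c x = 0" if "(\<Sum>x\<in>C. (\<lambda>b. c x * \<Psi> x b)) = 0" for c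
  proof -
    have "\<Psi> (\<Sum>x\<in>C. msmult (c x) x) = 0" using that lin\<Psi> by simp
    moreover have "(\<Sum>x\<in>C. msmult (c x) x) \<in> MV.span ?Dj"
      by (rule MV.span_sum, rule MV.span_scale, rule MV.span_base) (use C(1) in auto)
    ultimately have "(\<Sum>x\<in>C. msmult (c x) x) = 0" using inj0 by blast
    then show ?thesis using C(2) MV.dependent_finite[OF finC] by blast
  qed
  have ind: "FS.independent (\<Psi> ` C)" "card (\<Psi> ` C) = card C"
    using FS.indep_family[OF finC, of \<Psi>] rel by blast+
  define \<delta> where "\<delta> b = (\<lambda>x. if x = b then 1 else (0::'a))" for b :: "'a mpoly"
  have sp: "\<Psi> ` C \<subseteq> FS.span (\<delta> ` B)"
  proof
    fix g assume "g \<in> \<Psi> ` C"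
    then obtain r where g: "g = \<Psi> r" by blast
    have "g = (\<Sum>b\<in>B. (\<lambda>x. g b * \<delta> b x))"
      by (rule ext) (auto simp: g \<Psi>_def \<delta>_def sum_fun_app finB if_distrib cong: if_cong)
    also have "\<dots> \<in> FS.span (\<delta> ` B)"
      by (rule FS.span_sum, rule FS.span_scale, rule FS.span_base) auto
    finally show "g \<in> FS.span (\<delta> ` B)" .
  qed
  have "card (\<Psi> ` C) \<le> card (\<delta> ` B)"
    using FS.independent_span_bound[OF _ ind(1) sp] finB by blast
  also have "\<dots> \<le> card B" using finB card_image_le by blast
  finally show ?thesis using ind(2) B(4) C(4) by simp
qed

lemma sym_eq:
  fixes f :: "'a::field_char_0 mpoly"
  assumes "homogeneous d f" "vars_in {..<N} f" "i \<le> d"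
  shows "MV.dim (derivs N (d - i) f) = MV.dim (derivs N i f)"
  using sym_le[OF assms] sym_le[OF assms(1,2), of "d - i"] assms(3) by simp

definition lop :: "nat \<Rightarrow> nat \<Rightarrow> 'a::comm_ring_1 \<Rightarrow> 'a \<Rightarrow> 'a mpoly \<Rightarrow> 'a mpoly" where
  "lop u v a b q = msmult a (pdiff u q) + msmult b (pdiff v q)"

definition bin :: "nat \<Rightarrow> nat \<Rightarrow> nat \<Rightarrow> 'a::comm_ring_1 mpoly \<Rightarrow> bool" where
  "bin u v e q \<longleftrightarrow> homogeneous e q \<and> vars_in {u, v} q"

lemma pdiff_lop: "pdiff j (lop u v a b q) = lop u v a b (pdiff j (q::'a::field mpoly))"
  unfolding lop_def by (simp add: pdiff_add pdiff_msmult pdiff_commute)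

lemma pdw_lop: "pdw w (lop u v a b q) = lop u v a b (pdw w (q::'a::field mpoly))"
  by (induction w arbitrary: q) (simp_all add: pdiff_lop)

lemma lop_add: "lop u v a b (p + q) = lop u v a b p + lop u v a b (q::'a::field mpoly)"
  unfolding lop_def by (simp add: pdiff_add msmult_add_right)
lemma lop_diff: "lop u v a b (p - q) = lop u v a b p - lop u v a b (q::'a::field mpoly)"
  unfolding lop_def by (simp add: pdiff_diff msmult_diff_right)
lemma lop_msmult: "lop u v a b (msmult c q) = msmult c (lop u v a b (q::'a::field mpoly))"
  unfolding lop_def by (simp add: pdiff_msmult msmult_add_right mult.commute)
lemma lop_zero[simp]: "lop u v a b 0 = (0::'a::field mpoly)"
  unfolding lop_def by simp
lemma lop_sum: "lop u v a b (sum g A) = (\<Sum>x\<in>A. lop u v a b (g x :: 'a::field mpoly))"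
  by (induction A rule: infinite_finite_induct) (simp_all add: lop_add)

lemma bin_pdiff: "bin u v (Suc e) q \<Longrightarrow> bin u v e (pdiff j (q::'a::field_char_0 mpoly))"
  unfolding bin_def using hom_pdiff[of "Suc e" q j] vars_pdiff by auto
lemma bin_add: "bin u v e p \<Longrightarrow> bin u v e q \<Longrightarrow> bin u v e (p + q)"
  unfolding bin_def by (auto intro: hom_add vars_add)
lemma bin_diff: "bin u v e p \<Longrightarrow> bin u v e q \<Longrightarrow> bin u v e (p - (q::'a::field mpoly))"
  unfolding bin_def by (auto intro: hom_diff vars_diff)
lemma bin_msmult: "bin u v e p \<Longrightarrow> bin u v e (msmult c (p::'a::field mpoly))"
  unfolding bin_def by (auto intro: hom_msmult vars_msmult)
lemma bin_sum: "(\<And>x. x \<in> A \<Longrightarrow> bin u v e (g x)) \<Longrightarrow> bin u v e (sum g A)"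
  unfolding bin_def by (auto intro: hom_sum vars_sum)
lemma bin_lop: "bin u v (Suc e) q \<Longrightarrow> bin u v e (lop u v a b (q::'a::field_char_0 mpoly))"
  unfolding lop_def by (intro bin_add bin_msmult bin_pdiff)

lemma msmult_uminus_left: "msmult (- c) p = - msmult c (p::'a::field mpoly)"
  by (rule poly_mapping_eqI) simp

definition Ev :: "nat \<Rightarrow> nat \<Rightarrow> 'a::zero \<Rightarrow> nat" where
  "Ev u v a = (if a \<noteq> 0 then v else u)"

definition psi :: "nat \<Rightarrow> nat \<Rightarrow> 'a::comm_ring_1 \<Rightarrow> nat \<Rightarrow> 'a mpoly \<Rightarrow> 'a" where
  "psi u v a e q = lk (pdw (replicate e (Ev u v a)) q) 0"

lemma psi_lin: "psi u v a e (msmult s p - msmult t q) = s * psi u v a e p - t * psi u v a e (q::'a::field mpoly)"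
  unfolding psi_def by (simp add: pdw_diff pdw_msmult lookup_minus)

lemma kerK:
  assumes ab: "a \<noteq> 0 \<or> b \<noteq> 0"
  shows "bin u v e q \<Longrightarrow> lop u v a b q = 0 \<Longrightarrow> psi u v a e q = 0 \<Longrightarrow> q = (0::'a::field_char_0 mpoly)"
proof (induction e arbitrary: q)
  case 0
  then show ?case using hom0_zero[of q] by (simp add: bin_def psi_def)
next
  case (Suc e)
  let ?E = "Ev u v a"
  have q': "pdiff ?E q = 0"
  proof (rule Suc.IH)
    show "bin u v e (pdiff ?E q)" using bin_pdiff[OF Suc.prems(1)] .
    show "lop u v a b (pdiff ?E q) = 0" using Suc.prems(2) by (simp add: pdiff_lop[symmetric])
    show "psi u v a e (pdiff ?E q) = 0" using Suc.prems(3) by (simp add: psi_def)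
  qed
  have "pdiff u q = 0 \<and> pdiff v q = 0"
  proof (cases "a = 0")
    case True
    then have "b \<noteq> 0" using ab by simp
    moreover have "pdiff u q = 0" using q' True by (simp add: Ev_def)
    ultimately show ?thesis using Suc.prems(2) True by (simp add: lop_def)
  next
    case False
    then have "pdiff v q = 0" using q' by (simp add: Ev_def)
    then show ?thesis using Suc.prems(2) False by (simp add: lop_def)
  qed
  then show ?case using all_pdiff_zero[of "{u,v}" q e] Suc.prems(1) by (auto simp: bin_def)
qed

lemma kerK2:
  assumes ab: "a \<noteq> 0 \<or> b \<noteq> 0"
    and q: "bin u v e q1" "bin u v e q2" "lop u v a b q1 = 0" "lop u v a b q2 = 0"
  shows "msmult (psi u v a e q1) q2 = msmult (psi u v a e q2) (q1::'a::field_char_0 mpoly)"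
proof -
  let ?r = "msmult (psi u v a e q1) q2 - msmult (psi u v a e q2) q1"
  have "?r = 0"
  proof (rule kerK[OF ab])
    show "bin u v e ?r" using q by (intro bin_diff bin_msmult)
    show "lop u v a b ?r = 0" using q by (simp add: lop_diff lop_msmult)
    show "psi u v a e ?r = 0" by (simp add: psi_lin)
  qed
  then show ?thesis by simp
qed

lemma kerK3:
  assumes ab: "a \<noteq> 0 \<or> b \<noteq> 0"
    and q: "bin u v e q1" "bin u v e q2" "lop u v a b q1 = 0" "lop u v a b q2 = 0"
  shows "\<exists>s t. (s \<noteq> 0 \<or> t \<noteq> 0) \<and> msmult s q1 + msmult t q2 = (0::'a::field_char_0 mpoly)"
proof (cases "psi u v a e q1 = 0 \<and> psi u v a e q2 = 0")
  case True
  then have "q1 = 0" using kerK[OF ab q(1) q(3)] by simp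
  then show ?thesis by (intro exI[of _ 1] exI[of _ 0]) simp
next
  case False
  have "msmult (psi u v a e q2) q1 + msmult (- psi u v a e q1) q2 = 0"
    using kerK2[OF assms] by (simp add: msmult_uminus_left)
  then show ?thesis using False
    by (intro exI[of _ "psi u v a e q2"] exI[of _ "- psi u v a e q1"]) auto
qed

lemma LIS:
  assumes li: "lin_indep_fam n p" and S: "S \<subseteq> {..n}"
    and z: "(\<Sum>l\<in>S. msmult (c l) (p l)) = (0::'a::comm_ring_1 mpoly)"
  shows "\<forall>l\<in>S. c l = 0"
proof -
  define c' where "c' l = (if l \<in> S then c l else 0)" for l
  have "(\<Sum>l\<le>n. msmult (c' l) (p l)) = (\<Sum>l\<in>S. msmult (c' l) (p l))"
    by (rule sum.mono_neutral_right) (use S in \<open>auto simp: c'_def\<close>)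
  also have "\<dots> = (\<Sum>l\<in>S. msmult (c l) (p l))"
    by (rule sum.cong) (auto simp: c'_def)
  finally have "\<forall>i\<le>n. c' i = 0" using li z unfolding lin_indep_fam_def by metis
  then show ?thesis using S by (auto simp: c'_def)
qed

lemma LI2:
  assumes li: "lin_indep_fam n p" "i \<le> n" "j \<le> n" "i \<noteq> j"
    and z: "msmult s (p i) + msmult t (p j) = (0::'a::comm_ring_1 mpoly)"
  shows "s = 0 \<and> t = 0"
proof -
  define c where "c l = (if l = i then s else t)" for l
  have "(\<Sum>l\<in>{i,j}. msmult (c l) (p l)) = 0" using z li by (simp add: c_def)
  then have "\<forall>l\<in>{i,j}. c l = 0" using LIS[OF li(1), of "{i,j}"] li by auto
  then show ?thesis using li by (auto simp: c_def)
qed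

lemma LI3:
  assumes li: "lin_indep_fam n p" "i \<le> n" "j \<le> n" "k \<le> n" "i \<noteq> j" "i \<noteq> k" "j \<noteq> k"
    and z: "msmult A (p i) + msmult B (p j) + msmult C (p k) = (0::'a::comm_ring_1 mpoly)"
  shows "A = 0 \<and> B = 0 \<and> C = 0"
proof -
  define c where "c l = (if l = i then A else if l = j then B else C)" for l
  have "(\<Sum>l\<in>{i,j,k}. msmult (c l) (p l)) = 0" using z li by (simp add: c_def add.assoc)
  then have "\<forall>l\<in>{i,j,k}. c l = 0" using LIS[OF li(1), of "{i,j,k}"] li by auto
  then show ?thesis using li by (auto simp: c_def)
qed

lemma L1:
  assumes li: "lin_indep_fam n p" and n: "1 \<le> n"
    and b: "bin u v e (p 0)" "bin u v e (p 1)" and ab: "a \<noteq> 0 \<or> b \<noteq> 0"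
    and k: "lop u v a b (p 0) = 0" "lop u v a b (p 1) = (0::'a::field_char_0 mpoly)"
  shows False
proof -
  obtain s t where st: "s \<noteq> 0 \<or> t \<noteq> 0" "msmult s (p 0) + msmult t (p 1) = 0"
    using kerK3[OF ab b k] by blast
  then show False using LI2[OF li le0 n zero_neq_one st(2)] by simp
qed

lemma factor2:
  fixes a b c :: "'a::alg_closed_field"
  assumes "a \<noteq> 0 \<or> b \<noteq> 0 \<or> c \<noteq> 0"
  shows "\<exists>\<alpha> \<beta> \<gamma> \<delta>. (\<alpha> \<noteq> 0 \<or> \<beta> \<noteq> 0) \<and> (\<gamma> \<noteq> 0 \<or> \<delta> \<noteq> 0) \<and>
     \<alpha> * \<gamma> = a \<and> \<alpha> * \<delta> + \<beta> * \<gamma> = b \<and> \<beta> * \<delta> = c"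
proof (cases "a = 0")
  case True
  then show ?thesis using assms
    by (intro exI[of _ 0] exI[of _ 1] exI[of _ b] exI[of _ c]) auto
next
  case False
  define g where "g k = (if k = 0 then c else if k = 1 then - b else a)" for k :: nat
  obtain x where "(\<Sum>k\<le>2. g k * x ^ k) = 0"
    using alg_closed[of 2 g] False by (auto simp: g_def)
  then have x: "c - b * x + a * x^2 = 0" by (simp add: g_def numeral_2_eq_2)
  have "(b - a * x) * x = c" using x by (simp add: algebra_simps power2_eq_square)
  then show ?thesis using False
    by (intro exI[of _ a] exI[of _ "b - a * x"] exI[of _ 1] exI[of _ x]) auto
qed

definition qop :: "nat \<Rightarrow> nat \<Rightarrow> 'a::comm_ring_1 \<Rightarrow> 'a \<Rightarrow> 'a \<Rightarrow> 'a mpoly \<Rightarrow> 'a mpoly" where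
  "qop u v a b c q = msmult a (pdiff u (pdiff u q)) + msmult b (pdiff u (pdiff v q)) + msmult c (pdiff v (pdiff v q))"

lemma lop_lop:
  "lop u v \<alpha> \<beta> (lop u v \<gamma> \<delta> q) = qop u v (\<alpha> * \<gamma>) (\<alpha> * \<delta> + \<beta> * \<gamma>) (\<beta> * \<delta>) (q::'a::field mpoly)"
  unfolding lop_def qop_def
  by (rule poly_mapping_eqI) (simp add: pdiff_add pdiff_msmult lookup_add algebra_simps pdiff_commute[of v u])

lemma L2_aux:
  assumes li: "lin_indep_fam n p" "i \<le> n" "j \<le> n" "k \<le> n" "i \<noteq> j" "i \<noteq> k" "j \<noteq> k"
    and gd: "\<gamma> \<noteq> 0 \<or> \<delta> \<noteq> 0"
    and bz: "\<And>l. bin u v (Suc e) (z l)" and kz: "\<And>l. lop u v \<gamma> \<delta> (z l) = (0::'a::field_char_0 mpoly)"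
    and z1: "z 1 = msmult rk (p i) - msmult ri (p k)" and z2: "z 2 = msmult rk (p j) - msmult rj (p k)"
    and rk: "rk \<noteq> 0"
  shows False
proof -
  obtain s t where st: "s \<noteq> 0 \<or> t \<noteq> 0" "msmult s (z 1) + msmult t (z 2) = 0"
    using kerK3[OF gd bz[of 1] bz[of 2] kz[of 1] kz[of 2]] by blast
  have "msmult (s * rk) (p i) + msmult (t * rk) (p j) + msmult (- (s * ri + t * rj)) (p k) = 0"
    using st(2) unfolding z1 z2
    by (subst (asm) poly_mapping_eq_iff, subst poly_mapping_eq_iff)
       (simp add: fun_eq_iff lookup_add lookup_minus algebra_simps)
  then have "s * rk = 0 \<and> t * rk = 0" using LI3[OF li] by blast
  then show False using st(1) rk by simp
qed

lemma L2:
  fixes p :: "nat \<Rightarrow> 'a::{alg_closed_field, field_char_0} mpoly"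
  assumes li: "lin_indep_fam n p" and n: "2 \<le> n"
    and b: "\<And>i. i \<le> n \<Longrightarrow> bin u v (Suc e) (p i)" and abc: "a \<noteq> 0 \<or> b \<noteq> 0 \<or> c \<noteq> 0"
    and k: "\<And>i. i \<le> n \<Longrightarrow> qop u v a b c (p i) = 0"
  shows False
proof -
  obtain \<alpha> \<beta> \<gamma> \<delta> where f: "\<alpha> \<noteq> 0 \<or> \<beta> \<noteq> 0" "\<gamma> \<noteq> 0 \<or> \<delta> \<noteq> 0"
     "\<alpha> * \<gamma> = a" "\<alpha> * \<delta> + \<beta> * \<gamma> = b" "\<beta> * \<delta> = c"
    using factor2[OF abc] by blast
  define y where "y i = lop u v \<gamma> \<delta> (p i)" for i
  define r where "r i = psi u v \<alpha> e (y i)" for i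
  have biny: "bin u v e (y i)" if "i \<le> n" for i using bin_lop[OF b[OF that]] by (simp add: y_def)
  have ky: "lop u v \<alpha> \<beta> (y i) = 0" if "i \<le> n" for i using k[OF that] f by (simp add: y_def lop_lop)
  have swap: "lop u v \<gamma> \<delta> (msmult (r i) (p j) - msmult (r j) (p i)) = 0" if "i \<le> n" "j \<le> n" for i j
  proof -
    have "msmult (r i) (y j) = msmult (r j) (y i)"
      unfolding r_def by (rule kerK2[OF f(1) biny[OF that(1)] biny[OF that(2)] ky[OF that(1)] ky[OF that(2)]])
    then show ?thesis by (simp add: lop_diff lop_msmult y_def)
  qed
  have bz: "bin u v (Suc e) (msmult (r i) (p j) - msmult (r j) (p i))" if "i \<le> n" "j \<le> n" for i j
    using b that by (intro bin_diff bin_msmult) auto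
  have main: False if ijk: "i \<le> n" "j \<le> n" "k \<le> n" "i \<noteq> j" "i \<noteq> k" "j \<noteq> k" and rk: "r k \<noteq> 0" for i j k
  proof -
    define z where "z l = (if l = (1::nat) then msmult (r k) (p i) - msmult (r i) (p k)
                            else msmult (r k) (p j) - msmult (r j) (p k))" for l
    show False
    proof (rule L2_aux[OF li ijk f(2), where z = z and rk = "r k" and ri = "r i" and rj = "r j"])
      show "bin u v (Suc e) (z l)" for l using bz ijk by (simp add: z_def)
      show "lop u v \<gamma> \<delta> (z l) = 0" for l using swap ijk by (simp add: z_def)
    qed (use rk in \<open>simp_all add: z_def\<close>)
  qed
  show False
  proof (cases "r 0 = 0 \<and> r 1 = 0 \<and> r 2 = 0")
    case True
    have "y 0 = 0" using kerK[OF f(1) biny ky] True n by (simp add: r_def)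
    moreover have "y 1 = 0" using kerK[OF f(1) biny ky] True n by (simp add: r_def)
    ultimately show False
      using L1[OF li _ b b f(2)] n by (simp add: y_def)
  next
    case False
    then show False
      using main[of 1 2 0] main[of 0 2 1] main[of 0 1 2] n by auto
  qed
qed

lemma lop_shift: "lop u v 1 s x = lop u v 1 t x + msmult (s - t) (pdiff v (x::'a::field mpoly))"
  unfolding lop_def by (rule poly_mapping_eqI) (simp add: lookup_add algebra_simps)

lemma indepV:
  fixes q :: "'a::field_char_0 \<Rightarrow> 'a mpoly"
  assumes "finite T"
  shows "card T \<le> Suc e \<Longrightarrow> (\<forall>t\<in>T. bin u v e (q t) \<and> q t \<noteq> 0 \<and> lop u v 1 t (q t) = 0) \<Longrightarrow>
     (\<Sum>t\<in>T. msmult (lam t) (q t)) = 0 \<Longrightarrow> (\<forall>t\<in>T. lam t = 0)"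
  using assms
proof (induction T arbitrary: e q lam rule: finite_induct)
  case empty then show ?case by simp
next
  case (insert s T)
  show ?case
  proof (cases "T = {}")
    case True
    then show ?thesis using insert.prems by simp
  next
    case False
    then have "card T \<ge> 1" using insert.hyps(1) by (simp add: Suc_le_eq card_gt_0_iff)
    then obtain e' where e': "e = Suc e'" using insert.prems(1) insert.hyps
      by (cases e) auto
    have qs: "lop u v 1 s (q s) = 0" using insert.prems(2) by simp
    have sh: "lop u v 1 s (q t) = msmult (s - t) (pdiff v (q t))" if "t \<in> T" for t
      using lop_shift[of u v s "q t" t] insert.prems(2) that by simp
    have "0 = lop u v 1 s (\<Sum>t\<in>insert s T. msmult (lam t) (q t))" using insert.prems(3) by simp
    also have "\<dots> = (\<Sum>t\<in>insert s T. msmult (lam t) (lop u v 1 s (q t)))"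
      by (simp add: lop_sum lop_msmult)
    also have "\<dots> = (\<Sum>t\<in>T. msmult (lam t) (lop u v 1 s (q t)))"
      using insert.hyps qs by simp
    also have "\<dots> = (\<Sum>t\<in>T. msmult (lam t * (s - t)) (pdiff v (q t)))"
      by (rule sum.cong) (simp_all add: sh)
    finally have rel: "(\<Sum>t\<in>T. msmult (lam t * (s - t)) (pdiff v (q t))) = 0" by simp
    have "\<forall>t\<in>T. lam t * (s - t) = 0"
    proof (rule insert.IH[of e' "\<lambda>t. pdiff v (q t)"])
      show "card T \<le> Suc e'" using insert.prems(1) insert.hyps e' by simp
      show "\<forall>t\<in>T. bin u v e' (pdiff v (q t)) \<and> pdiff v (q t) \<noteq> 0 \<and> lop u v 1 t (pdiff v (q t)) = 0"
      proof
        fix t assume t: "t \<in> T"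
        have bq: "bin u v (Suc e') (q t)" and nz: "q t \<noteq> 0" and k: "lop u v 1 t (q t) = 0"
          using insert.prems(2) t e' by auto
        have "pdiff v (q t) \<noteq> 0"
        proof
          assume z: "pdiff v (q t) = 0"
          then have "pdiff u (q t) = 0" using k by (simp add: lop_def)
          then have "q t = 0" using all_pdiff_zero[of "{u,v}" "q t" e'] z bq by (auto simp: bin_def)
          then show False using nz by simp
        qed
        then show "bin u v e' (pdiff v (q t)) \<and> pdiff v (q t) \<noteq> 0 \<and> lop u v 1 t (pdiff v (q t)) = 0"
          using bin_pdiff[OF bq] k by (simp add: pdiff_lop[symmetric])
      qed
      show "(\<Sum>t\<in>T. msmult (lam t * (s - t)) (pdiff v (q t))) = 0" by (rule rel)
    qed
    then have lT: "\<forall>t\<in>T. lam t = 0" using insert.hyps(2) by auto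
    then have "msmult (lam s) (q s) = 0" using insert.prems(3) insert.hyps by simp
    then show ?thesis using lT insert.prems(2) by auto
  qed
qed

lemma L3:
  fixes p :: "nat \<Rightarrow> 'a::field_char_0 mpoly"
  assumes li: "lin_indep_fam n p" and b: "\<And>i. i \<le> n \<Longrightarrow> bin u v e (p i)" and ne: "n + 1 \<le> e"
  shows "\<exists>t. \<forall>c. lop u v 1 t (\<Sum>i\<le>n. msmult (c i) (p i)) = 0 \<longrightarrow> (\<forall>i\<le>n. c i = 0)"
proof (rule ccontr)
  assume "\<not> ?thesis"
  then have "\<forall>t. \<exists>c. lop u v 1 t (\<Sum>i\<le>n. msmult (c i) (p i)) = 0 \<and> \<not> (\<forall>i\<le>n. c i = 0)" by blast
  then obtain C where C: "\<And>t. lop u v 1 t (\<Sum>i\<le>n. msmult (C t i) (p i)) = 0" "\<And>t. \<not> (\<forall>i\<le>n. C t i = 0)"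
    by metis
  define q where "q t = (\<Sum>i\<le>n. msmult (C t i) (p i))" for t
  have qnz: "q t \<noteq> 0" for t using C(2)[of t] li unfolding q_def lin_indep_fam_def by blast
  have qb: "bin u v e (q t)" for t unfolding q_def by (intro bin_sum bin_msmult b) auto
  define T where "T = (of_nat ` {..e} :: 'a set)"
  have finT: "finite T" by (simp add: T_def)
  have cardT: "card T = Suc e" unfolding T_def
    by (subst card_image) (auto intro: inj_onI)
  have rel: "\<forall>t\<in>T. lam t = 0" if "(\<Sum>t\<in>T. msmult (lam t) (q t)) = 0" for lam
    using indepV[OF finT, of e u v q lam] cardT qnz qb C(1) that by (simp add: q_def)
  have ind: "MV.independent (q ` T)" "card (q ` T) = card T"
    using MV.indep_family[OF finT, of q] rel by blast+
  have "q ` T \<subseteq> MV.span (p ` {..n})"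
  proof
    fix x assume "x \<in> q ` T"
    then obtain t where xt: "x = q t" by blast
    have "q t \<in> MV.span (p ` {..n})"
      unfolding q_def by (rule MV.span_sum, rule MV.span_scale, rule MV.span_base) auto
    then show "x \<in> MV.span (p ` {..n})" using xt by simp
  qed
  then have "card (q ` T) \<le> card (p ` {..n})"
    using MV.independent_span_bound[OF _ ind(1)] by blast
  also have "\<dots> \<le> Suc n" using card_image_le[of "{..n}" p] by simp
  finally show False using ind(2) cardT ne by simp
qed

lemma bin_pdiff': "bin u v e q \<Longrightarrow> bin u v (e - 1) (pdiff j (q::'a::field_char_0 mpoly))"
  unfolding bin_def using hom_pdiff vars_pdiff by blast

lemma bin_pdw: "bin u v e q \<Longrightarrow> bin u v (e - length w) (pdw w (q::'a::field_char_0 mpoly))"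
  unfolding bin_def using hom_pdw vars_pdw by blast

lemma bin_zero[simp]: "bin u v e 0"
  by (simp add: bin_def)

lemma mpoly_expand: "q = (\<Sum>m\<in>Poly_Mapping.keys q. msmult (lk q m) (sg m 1))"
proof (rule poly_mapping_eqI)
  fix m'
  have "lk (\<Sum>m\<in>Poly_Mapping.keys q. msmult (lk q m) (sg m 1)) m' =
        (\<Sum>m\<in>Poly_Mapping.keys q. if m = m' then lk q m else 0)"
    by (simp add: lookup_sum lookup_single when_def if_distrib cong: if_cong)
  also have "\<dots> = lk q m'" by (simp add: sum.delta in_keys_iff)
  finally show "lk q m' = lk (\<Sum>m\<in>Poly_Mapping.keys q. msmult (lk q m) (sg m 1)) m'" by simp
qed

lemma bin_span:
  assumes uv: "u \<noteq> v" and b: "bin u v k q"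
  shows "q \<in> MV.span ((\<lambda>a. sg (sg u a + sg v (k - a)) 1) ` {..k})"
proof -
  have "msmult (lk q m) (sg m 1) \<in> MV.span ((\<lambda>a. sg (sg u a + sg v (k - a)) 1) ` {..k})"
    if m: "m \<in> Poly_Mapping.keys q" for m
  proof -
    have km: "Poly_Mapping.keys m \<subseteq> {u, v}" "mon_deg m = k" using b m by (auto simp: bin_def vars_in_def homogeneous_def)
    have "mon_deg m = lk m u + lk m v"
      using mon_deg_sum[of "{u,v}" m] km uv by simp
    then have s: "lk m u + lk m v = k" using km by simp
    have "m = sg u (lk m u) + sg v (lk m v)"
    proof (rule poly_mapping_eqI)
      fix x show "lk m x = lk (sg u (lk m u) + sg v (lk m v)) x"
        using km(1) uv by (auto simp: lookup_add lookup_single when_def in_keys_iff)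
    qed
    moreover have "lk m v = k - lk m u" using s by simp
    ultimately have "m = sg u (lk m u) + sg v (k - lk m u)" by simp
    moreover have "lk m u \<le> k" using s by simp
    ultimately have "sg m 1 \<in> (\<lambda>a. sg (sg u a + sg v (k - a)) 1) ` {..k}"
      by (intro image_eqI[of _ _ "lk m u"]) auto
    then show ?thesis by (intro MV.span_scale MV.span_base)
  qed
  then have "(\<Sum>m\<in>Poly_Mapping.keys q. msmult (lk q m) (sg m 1)) \<in> MV.span ((\<lambda>a. sg (sg u a + sg v (k - a)) 1) ` {..k})"
    by (intro MV.span_sum) auto
  then show ?thesis using mpoly_expand[of q] by simp
qed

context
  fixes n d :: nat and p :: "nat \<Rightarrow> 'a::{alg_closed_field, field_char_0} mpoly" and g f :: "'a mpoly"
  assumes n2: "2 \<le> n" and dn: "n + 2 \<le> d"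
    and pb: "\<And>i. i \<le> n \<Longrightarrow> bin (n+1) (n+2) (d-1) (p i)"
    and li: "lin_indep_fam n p"
    and gb: "bin (n+1) (n+2) d g"
    and fdef: "f = (\<Sum>i\<le>n. mvar i * p i) + g"
begin

lemma f_hom: "homogeneous d f"
proof -
  have "homogeneous (Suc (d - 1)) (mvar i * p i)" if "i \<le> n" for i
    using hom_mvar_mult pb[OF that] by (auto simp: bin_def)
  then have "homogeneous d (mvar i * p i)" if "i \<le> n" for i using that dn by simp
  then show ?thesis unfolding fdef using gb by (auto simp: bin_def intro!: hom_add hom_sum)
qed

lemma f_vars: "vars_in {..<n+3} f"
proof -
  have "vars_in {..<n+3} (mvar i * p i)" if "i \<le> n" for i
    using pb[OF that] that by (intro vars_mvar_mult) (auto simp: bin_def elim: vars_mono)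
  then show ?thesis unfolding fdef using gb by (auto simp: bin_def intro!: vars_add vars_sum elim: vars_mono)
qed

lemma pdiff_x_bin: "k \<le> n \<Longrightarrow> bin (n+1) (n+2) e q \<Longrightarrow> pdiff k q = (0::'a mpoly)"
  unfolding bin_def by (intro vars_pdiff_out[of "{n+1, n+2}"]) auto

lemma pdiff_x_f: "k \<le> n \<Longrightarrow> pdiff k f = p k"
proof -
  assume k: "k \<le> n"
  have "pdiff k f = (\<Sum>i\<le>n. pdiff k (mvar i * p i)) + pdiff k g"
    by (simp add: fdef pdiff_add pdiff_sum)
  also have "\<dots> = (\<Sum>i\<le>n. (if i = k then p i else 0))"
    using pdiff_x_bin[OF k gb] pdiff_x_bin[OF k pb] by (simp add: pdiff_mvar_mult)
  also have "\<dots> = p k" using k by (simp add: sum.delta)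
  finally show ?thesis .
qed

lemma pdiff_x_pdw: "k \<le> n \<Longrightarrow> pdiff k (pdw w f) = pdw w (p k)"
  by (simp add: pdw_pdiff[symmetric] pdiff_x_f)

lemma sum_split3: "(\<Sum>j<n+3. F j) = (\<Sum>j\<le>n. F j) + F (n+1) + (F (n+2) :: 'b::comm_monoid_add)"
  by (simp add: numeral_3_eq_3 lessThan_Suc_atMost[symmetric] add.assoc)

lemma sum_split4: "(\<Sum>j\<le>n+3. F j) = (\<Sum>j\<le>n. F j) + F (n+1) + F (n+2) + (F (n+3) :: 'b::comm_monoid_add)"
  by (simp add: numeral_3_eq_3 add.assoc)

lemma derivs1: "derivs N 1 f = (\<lambda>j. pdiff j f) ` {..<N}"
  by auto

lemma derivs2_mem: "j < N \<Longrightarrow> j' < N \<Longrightarrow> pdiff j (pdiff j' f) \<in> derivs N 2 f"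
  by (auto simp: numeral_2_eq_2)

lemma h1: "MV.dim (derivs (n+3) 1 f) = n + 3"
proof -
  let ?u = "n+1" and ?v = "n+2"
  have rel: "\<forall>j\<in>{..<n+3}. c j = 0" if z: "(\<Sum>j\<in>{..<n+3}. msmult (c j) (pdiff j f)) = 0" for c
  proof -
    have z2: "(\<Sum>j\<le>n. msmult (c j) (p j)) + msmult (c ?u) (pdiff ?u f) + msmult (c ?v) (pdiff ?v f) = 0"
      using z by (simp add: sum_split3 pdiff_x_f)
    have uv: "c ?u = 0 \<and> c ?v = 0"
    proof (rule ccontr)
      assume "\<not> (c ?u = 0 \<and> c ?v = 0)"
      then have ab: "c ?u \<noteq> 0 \<or> c ?v \<noteq> 0" by blast
      have k: "lop ?u ?v (c ?u) (c ?v) (p k) = 0" if "k \<le> n" for k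
      proof -
        have "pdiff k ((\<Sum>j\<le>n. msmult (c j) (p j)) + msmult (c ?u) (pdiff ?u f) + msmult (c ?v) (pdiff ?v f)) = 0"
          using z2 by simp
        moreover have "pdiff k (\<Sum>j\<le>n. msmult (c j) (p j)) = 0"
          using pdiff_x_bin[OF that pb] by (simp add: pdiff_sum pdiff_msmult)
        ultimately show ?thesis using that
          by (simp add: pdiff_add pdiff_msmult lop_def pdiff_commute[of k] pdiff_x_f)
      qed
      show False using L1[OF li _ pb pb ab k k] n2 by simp
    qed
    then have "(\<Sum>j\<le>n. msmult (c j) (p j)) = 0" using z2 by simp
    then have "\<forall>j\<le>n. c j = 0" using li unfolding lin_indep_fam_def by blast
    then show ?thesis using uv by (auto simp: less_Suc_eq numeral_3_eq_3)
  qed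
  have i1: "MV.independent ((\<lambda>j. pdiff j f) ` {..<n+3})" and i2: "card ((\<lambda>j. pdiff j f) ` {..<n+3}) = card {..<n+3}"
    using MV.indep_family[of "{..<n+3}" "\<lambda>j. pdiff j f"] rel by blast+
  have "MV.dim ((\<lambda>j. pdiff j f) ` {..<n+3}) = card ((\<lambda>j. pdiff j f) ` {..<n+3})"
    by (rule MV.dim_eq_card_independent[OF i1])
  then show ?thesis unfolding derivs1 using i2 by simp
qed

lemma h2: "n + 4 \<le> MV.dim (derivs (n+3) 2 f)"
proof -
  let ?u = "n+1" and ?v = "n+2"
  have ne: "n + 1 \<le> d - 1" using dn by simp
  obtain t where t: "\<And>c. lop ?u ?v 1 t (\<Sum>i\<le>n. msmult (c i) (p i)) = 0 \<Longrightarrow> (\<forall>i\<le>n. c i = 0)"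
    using L3[OF li pb ne] by blast
  define fuu where "fuu = pdiff ?u (pdiff ?u f)"
  define fuv where "fuv = pdiff ?u (pdiff ?v f)"
  define fvv where "fvv = pdiff ?v (pdiff ?v f)"
  define G where "G i = (if i \<le> n then lop ?u ?v 1 t (p i) else if i = n+1 then fuu
      else if i = n+2 then fuv else fvv)" for i
  have rel: "\<forall>i\<in>{..n+3}. c i = 0" if z: "(\<Sum>i\<in>{..n+3}. msmult (c i) (G i)) = 0" for c
  proof -
    have z2: "lop ?u ?v 1 t (\<Sum>i\<le>n. msmult (c i) (p i)) + msmult (c (n+1)) fuu + msmult (c (n+2)) fuv
       + msmult (c (n+3)) fvv = 0"
      using z by (simp add: sum_split4 G_def lop_sum lop_msmult)
    have abc: "c (n+1) = 0 \<and> c (n+2) = 0 \<and> c (n+3) = 0"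
    proof (rule ccontr)
      assume "\<not> ?thesis"
      then have abc: "c (n+1) \<noteq> 0 \<or> c (n+2) \<noteq> 0 \<or> c (n+3) \<noteq> 0" by blast
      have k: "qop ?u ?v (c (n+1)) (c (n+2)) (c (n+3)) (p k) = 0" if "k \<le> n" for k
      proof -
        have "pdiff k (lop ?u ?v 1 t (\<Sum>i\<le>n. msmult (c i) (p i)) + msmult (c (n+1)) fuu + msmult (c (n+2)) fuv
           + msmult (c (n+3)) fvv) = 0" using z2 by simp
        moreover have "pdiff k (lop ?u ?v 1 t (\<Sum>i\<le>n. msmult (c i) (p i))) = 0"
          using pdiff_x_bin[OF that pb] by (simp add: pdiff_lop pdiff_sum pdiff_msmult)
        moreover have "pdiff k fuu = pdiff ?u (pdiff ?u (p k))" "pdiff k fuv = pdiff ?u (pdiff ?v (p k))"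
          "pdiff k fvv = pdiff ?v (pdiff ?v (p k))"
          using that by (simp_all add: fuu_def fuv_def fvv_def pdiff_commute[of k] pdiff_x_f)
        ultimately show ?thesis by (simp add: pdiff_add pdiff_msmult qop_def)
      qed
      have pb2: "bin ?u ?v (Suc (d - 2)) (p i)" if "i \<le> n" for i
        using pb[OF that] dn by (simp add: Suc_diff_Suc numeral_2_eq_2)
      show False using L2[OF li n2 pb2 abc k] by blast
    qed
    then have "lop ?u ?v 1 t (\<Sum>i\<le>n. msmult (c i) (p i)) = 0" using z2 by simp
    then have "\<forall>i\<le>n. c i = 0" by (rule t)
    then show ?thesis using abc by (auto simp: le_Suc_eq numeral_3_eq_3)
  qed
  have ind: "MV.independent (G ` {..n+3})" "card (G ` {..n+3}) = card {..n+3}"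
    using MV.indep_family[of "{..n+3}" G] rel by blast+
  have sp: "G ` {..n+3} \<subseteq> MV.span (derivs (n+3) 2 f)"
  proof
    fix x assume "x \<in> G ` {..n+3}"
    then obtain i where i: "i \<le> n+3" "x = G i" by auto
    have m: "pdiff j (pdiff j' f) \<in> MV.span (derivs (n+3) 2 f)" if "j < n+3" "j' < n+3" for j j'
      using derivs2_mem[OF that] by (rule MV.span_base)
    show "x \<in> MV.span (derivs (n+3) 2 f)"
    proof (cases "i \<le> n")
      case True
      then have "x = msmult 1 (pdiff ?u (pdiff i f)) + msmult t (pdiff ?v (pdiff i f))"
        using i by (simp add: G_def lop_def pdiff_x_f)
      then show ?thesis using m True by (auto intro!: MV.span_add MV.span_scale)
    next
      case False
      then show ?thesis using i m by (auto simp: G_def fuu_def fuv_def fvv_def)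
    qed
  qed
  have "card (G ` {..n+3}) \<le> MV.dim (derivs (n+3) 2 f)"
    by (rule MV.card_le_dim_fin[OF finite_derivs ind(1) sp])
  then show ?thesis using ind(2) by simp
qed

lemma derivs_char:
  "1 \<le> i \<Longrightarrow> x \<in> derivs (n+3) i f \<Longrightarrow>
     bin (n+1) (n+2) (d - i) x \<or> (\<exists>a\<le>i. x = pdw (replicate a (n+1) @ replicate (i - a) (n+2)) f)"
proof (induction i arbitrary: x)
  case 0 then show ?case by simp
next
  case (Suc i)
  let ?u = "n+1" and ?v = "n+2"
  from Suc.prems(2) obtain j y where jy: "x = pdiff j y" "j < n+3" "y \<in> derivs (n+3) i f" by auto
  have jc: "j \<le> n \<or> j = ?u \<or> j = ?v" using jy(2) by auto
  show ?case
  proof (cases "i = 0")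
    case True
    then have y: "y = f" using jy by simp
    show ?thesis
    proof (cases "j \<le> n")
      case True
      then show ?thesis using pdiff_x_f[OF True] pb[OF True] jy y \<open>i = 0\<close> by simp
    next
      case False
      then have "j = ?u \<or> j = ?v" using jc by blast
      then show ?thesis
      proof
        assume "j = ?u" then show ?thesis using jy y \<open>i = 0\<close>
          by (intro disjI2 exI[of _ 1]) simp
      next
        assume "j = ?v" then show ?thesis using jy y \<open>i = 0\<close>
          by (intro disjI2 exI[of _ 0]) simp
      qed
    qed
  next
    case False
    then have "bin ?u ?v (d - i) y \<or> (\<exists>a\<le>i. y = pdw (replicate a ?u @ replicate (i - a) ?v) f)"
      using Suc.IH jy(3) by simp
    then show ?thesis
    proof
      assume "bin ?u ?v (d - i) y"
      then have "bin ?u ?v (d - i - 1) (pdiff j y)" by (rule bin_pdiff')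
      moreover have "d - i - 1 = d - Suc i" by simp
      ultimately show ?thesis using jy(1) by simp
    next
      assume "\<exists>a\<le>i. y = pdw (replicate a ?u @ replicate (i - a) ?v) f"
      then obtain a where a: "a \<le> i" "y = pdw (replicate a ?u @ replicate (i - a) ?v) f" by blast
      let ?w = "replicate a ?u @ replicate (i - a) ?v"
      have lw: "length ?w = i" using a by simp
      show ?thesis
      proof (cases "j \<le> n")
        case True
        then have "x = pdw ?w (p j)" using jy a pdiff_x_pdw by simp
        moreover have "bin ?u ?v (d - 1 - length ?w) (pdw ?w (p j))" using bin_pdw pb[OF True] by blast
        ultimately show ?thesis using lw by simp
      next
        case False
        then have "j = ?u \<or> j = ?v" using jc by blast
        then show ?thesis
        proof
          assume ju: "j = ?u"
          have "x = pdw (?u # ?w) f" using jy a ju by (simp add: pdw_pdiff)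
          then have "x = pdw (replicate (Suc a) ?u @ replicate (Suc i - Suc a) ?v) f" by simp
          then show ?thesis using a by (intro disjI2 exI[of _ "Suc a"]) simp
        next
          assume jv: "j = ?v"
          have "pdw (?w @ [?v]) f = pdiff ?v y" unfolding a(2) by (rule pdw_snoc)
          then have "x = pdw (?w @ [?v]) f" using jy jv by simp
          also have "?w @ [?v] = replicate a ?u @ replicate (Suc i - a) ?v"
            using a by (simp add: Suc_diff_le replicate_append_same)
          finally show ?thesis using a by (intro disjI2 exI[of _ a]) simp
        qed
      qed
    qed
  qed
qed

lemma hbound: "MV.dim (derivs (n+3) i f) \<le> d + 2"
proof -
  let ?u = "n+1" and ?v = "n+2"
  consider "i = 0" | "d < i" | "1 \<le> i \<and> i \<le> d" by linarith
  then show ?thesis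
  proof cases
    case 1
    have "MV.dim (derivs (n+3) i f) \<le> card {f}"
      using 1 by (intro MV.dim_le_card) (auto intro: MV.span_base)
    then show ?thesis by simp
  next
    case 2
    have "derivs (n+3) i f \<subseteq> MV.span {0}"
      using 2 pdw_vanish[OF f_hom] by (auto simp: derivs_eq intro: MV.span_zero)
    then have "MV.dim (derivs (n+3) i f) \<le> card {0::'a mpoly}"
      by (intro MV.dim_le_card) auto
    then show ?thesis by simp
  next
    case 3
    define M where "M = (\<lambda>a. sg (sg ?u a + sg ?v (d - i - a)) (1::'a)) ` {..d - i}"
    define Fs where "Fs = (\<lambda>a. pdw (replicate a ?u @ replicate (i - a) ?v) f) ` {..i}"
    have sub: "derivs (n+3) i f \<subseteq> MV.span (M \<union> Fs)"
    proof
      fix x assume x: "x \<in> derivs (n+3) i f"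
      from derivs_char[OF _ x] 3
      have "bin ?u ?v (d - i) x \<or> (\<exists>a\<le>i. x = pdw (replicate a ?u @ replicate (i - a) ?v) f)" by simp
      then show "x \<in> MV.span (M \<union> Fs)"
      proof
        assume "bin ?u ?v (d - i) x"
        then have "x \<in> MV.span M" unfolding M_def by (intro bin_span) auto
        then show ?thesis using MV.span_mono[of M "M \<union> Fs"] by blast
      next
        assume "\<exists>a\<le>i. x = pdw (replicate a ?u @ replicate (i - a) ?v) f"
        then have "x \<in> Fs" unfolding Fs_def by auto
        then show ?thesis by (intro MV.span_base) auto
      qed
    qed
    have "MV.dim (derivs (n+3) i f) \<le> card (M \<union> Fs)"
      by (rule MV.dim_le_card[OF sub]) (simp add: M_def Fs_def)
    also have "\<dots> \<le> card M + card Fs" by (rule card_Un_le)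
    also have "\<dots> \<le> Suc (d - i) + Suc i"
      unfolding M_def Fs_def by (intro add_mono card_image_le[THEN order_trans]) auto
    also have "\<dots> = d + 2" using 3 by simp
    finally show ?thesis .
  qed
qed

end

theorem lemma3p3:
  fixes f :: "'a::{alg_closed_field, field_char_0} mpoly"
    and n d :: nat
  assumes "n \<ge> 2" and "d \<ge> n + 2"
    and "perazzo_form n d f"
  shows "(hvec (n+3) f 1 = n + 3 \<and> hvec (n+3) f (d - 1) = n + 3)
       \<and> (hvec (n+3) f 2 = hvec (n+3) f (d - 2) \<and> hvec (n+3) f 2 \<ge> n + 4)
       \<and> (\<forall>i. hvec (n+3) f i \<le> d + 2)"
proof -
  obtain p g where pg: "\<forall>i\<le>n. homogeneous (d - 1) (p i) \<and> vars_in {n+1, n+2} (p i)"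
    "lin_indep_fam n p" "homogeneous d g" "vars_in {n+1, n+2} g" "f = (\<Sum>i\<le>n. mvar i * p i) + g"
    using assms(3) unfolding perazzo_form_def by blast
  have pb: "\<And>i. i \<le> n \<Longrightarrow> bin (n+1) (n+2) (d-1) (p i)" using pg(1) by (simp add: bin_def)
  have gb: "bin (n+1) (n+2) d g" using pg(3,4) by (simp add: bin_def)
  note ctx = assms(1) assms(2) pb pg(2) gb pg(5)
  have H1: "hvec (n+3) f 1 = n + 3" unfolding hvec_def using h1[OF ctx] .
  have hom: "homogeneous d f" using f_hom[OF ctx] .
  have vars: "vars_in {..<n+3} f" using f_vars[OF ctx] .
  have "hvec (n+3) f (d - 1) = hvec (n+3) f 1"
    unfolding hvec_def using sym_eq[OF hom vars, of 1] assms(2) by simp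
  moreover have "hvec (n+3) f 2 = hvec (n+3) f (d - 2)"
    unfolding hvec_def using sym_eq[OF hom vars, of 2] assms(2) by simp
  moreover have "hvec (n+3) f 2 \<ge> n + 4" unfolding hvec_def using h2[OF ctx] .
  moreover have "\<forall>i. hvec (n+3) f i \<le> d + 2" unfolding hvec_def using hbound[OF ctx] by blast
  ultimately show ?thesis using H1 by simp
qed

end
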